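(* Let $p_\Gamma$ be continuous and quasiconcave, and let $H$ and $\Gamma$ be independent. Fix $R_c>0$. Then the function $R_s\mapsto ED_s(R_s,R_c)$ on $R_s\ge0$ is minimized at $$R_s=\tfrac12\log_2\!\big(1+(1+\bar\gamma(R_c))(2^{2R_c}-1)\big)-R_c .$$
   Context: $H\ge0$, $\Gamma\ge0$ are the channel and side-information gains with densities $p_H,p_\Gamma$. Logarithms base 2. Define $D_d(R,\gamma)=(\gamma+2^{2R})^{-1}$. For rates $R_s\ge0,R_c>0$ define the outage set $\mathcal O_s=\{(h,\gamma): R_c\ge\tfrac12\log_2(1+h)\}\cup\{(h,\gamma): R_c\le \tfrac12\log_2(1+\tfrac{2^{2(R_s+R_c)}-1}{1+\gamma})\}$ and the separate source-channel coding expected distortion $ED_s(R_s,R_c)=\mathrm E\big[D_d(R_s+R_c,\Gamma)\mathbf 1\{(H,\Gamma)\notin\mathcal O_s\}\big]+\mathrm E\big[D_d(0,\Gamma)\mathbf 1\{(H,\Gamma)\in\mathcal O_s\}\big]$. Target state $\bar\gamma(R)$: for continuous quasiconcave $p_\Gamma$ write the super-level sets as $[\gamma_l(\alpha),\gamma_r(\alpha)]=\{\gamma\ge0:p_\Gamma(\gamma)\ge\alpha\}$. For $R\ge0$, $\bar\gamma(R)=\gamma_l(\alpha^* )$ where $\alpha^*\in[0,\max p_\Gamma]$ solves $$\int_{\gamma_l(\alpha^* )}^\infty\frac{p_\Gamma(\gamma)-\alpha^*}{\big((1+\gamma_l(\alpha^* ))2^{2R}+\gamma-\gamma_l(\alpha^*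 )\big)^2}\,d\gamma=0 .$$ *)

theory Defs
  imports "HOL-Probability.Probability"
begin

definition Dd :: "real \<Rightarrow> real \<Rightarrow> real" where
  "Dd R g = 1 / (g + 2 powr (2 * R))"

definition outage_s :: "real \<Rightarrow> real \<Rightarrow> (real \<times> real) set" where
  "outage_s Rs Rc =
     {(h, g). Rc \<ge> 1/2 * log 2 (1 + h)} \<union>
     {(h, g). Rc \<le> 1/2 * log 2 (1 + (2 powr (2 * (Rs + Rc)) - 1) / (1 + g))}"

text \<open>Expected distortion of separate source-channel coding, for channel gain H and
  side-information gain G, random variables on the probability space M.\<close>
definition ED_s :: "'w measure \<Rightarrow> ('w \<Rightarrow> real) \<Rightarrow> ('w \<Rightarrow> real) \<Rightarrow> real \<Rightarrow> real \<Rightarrow> real" where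
  "ED_s M H G Rs Rc =
     (\<integral>\<omega>. Dd (Rs + Rc) (G \<omega>) * indicator (- outage_s Rs Rc) (H \<omega>, G \<omega>) \<partial>M)
   + (\<integral>\<omega>. Dd 0 (G \<omega>) * indicator (outage_s Rs Rc) (H \<omega>, G \<omega>) \<partial>M)"

definition quasiconcave_nonneg :: "(real \<Rightarrow> real) \<Rightarrow> bool" where
  "quasiconcave_nonneg p \<longleftrightarrow>
     (\<forall>x y t. 0 \<le> x \<longrightarrow> 0 \<le> y \<longrightarrow> 0 \<le> t \<longrightarrow> t \<le> 1 \<longrightarrow>
        min (p x) (p y) \<le> p (t * x + (1 - t) * y))"

definition gamma_l :: "(real \<Rightarrow> real) \<Rightarrow> real \<Rightarrow> real" where
  "gamma_l p a = Inf {g. 0 \<le> g \<and> a \<le> p g}"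

definition target_alpha :: "(real \<Rightarrow> real) \<Rightarrow> real \<Rightarrow> real \<Rightarrow> bool" where
  "target_alpha p R a \<longleftrightarrow>
     0 \<le> a \<and> a \<le> Sup (p ` {0..}) \<and>
     (LINT g:{gamma_l p a..}|lborel.
        (p g - a) / ((1 + gamma_l p a) * 2 powr (2 * R) + g - gamma_l p a)\<^sup>2) = 0"

end

theory Submission
  imports Defs
begin



lemma qc_mid:
  assumes "quasiconcave_nonneg p" "0 \<le> x" "x \<le> y" "y \<le> z"
  shows "min (p x) (p z) \<le> p y"
proof (cases "x = z")
  case True then show ?thesis using assms by auto
next
  case False
  then have xz: "x < z" using assms by auto
  define t where "t = (z - y) / (z - x)"
  have t0: "0 \<le> t" "t \<le> 1" using assms xz by (auto simp: t_def field_simps)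
  have h: "t * (z - x) = z - y" using xz by (simp add: t_def)
  have "t * x + (1 - t) * z = z - t * (z - x)" by (simp add: algebra_simps)
  then have "t * x + (1 - t) * z = y" using h by simp
  then show ?thesis using assms(1) t0 assms unfolding quasiconcave_nonneg_def
    by (metis order.trans)
qed

locale dens =
  fixes p :: "real \<Rightarrow> real" and c :: real
  assumes p_nn: "\<And>x. 0 \<le> p x"
    and p_meas[measurable]: "p \<in> borel_measurable lborel"
    and p_cont: "continuous_on {0..} p"
    and p_qc: "quasiconcave_nonneg p"
    and p_int: "set_integrable lborel {0..} p"
    and c_pos: "0 < c"
begin

definition D :: "real \<Rightarrow> real" where "D x = 1 + c * (1 + x)"
definition kf :: "real \<Rightarrow> real \<Rightarrow> real" where "kf u g = 1 / (g + 1) - 1 / (g + D u)"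
definition F :: "real \<Rightarrow> real" where "F T = (LINT g:{T<..}|lborel. p g * kf T g)"
definition Gs :: "real \<Rightarrow> real" where
  "Gs x = (LINT g:{x<..}|lborel. p g / (g + D x)\<^sup>2) - p x / (x + D x)"

lemma D_ge1: "0 \<le> x \<Longrightarrow> 1 \<le> D x" using c_pos by (simp add: D_def)

lemma int_bdd:
  assumes "A \<in> sets lborel" "A \<subseteq> {0..}" "h \<in> borel_measurable lborel" "\<And>g. g \<in> A \<Longrightarrow> \<bar>h g\<bar> \<le> B"
  shows "set_integrable lborel A (\<lambda>g. p g * h g)"
proof (rule set_integrable_bound[where f="\<lambda>g. B * p g"])
  have "set_integrable lborel A p" by (rule set_integrable_subset[OF p_int assms(1,2)])
  then show "set_integrable lborel A (\<lambda>g. B * p g)" by auto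
  show "set_borel_measurable lborel A (\<lambda>g. p g * h g)"
    using assms(1,3) unfolding set_borel_measurable_def by measurable
  show "AE x in lborel. x \<in> A \<longrightarrow> norm (p x * h x) \<le> norm (B * p x)"
  proof (rule AE_I2, rule impI)
    fix x assume "x \<in> A"
    then have "\<bar>h x\<bar> \<le> B" by (rule assms(4))
    then show "norm (p x * h x) \<le> norm (B * p x)" using p_nn[of x]
      by (simp add: abs_mult) (metis abs_ge_self mult.commute mult_left_mono order_trans abs_of_nonneg)
  qed
qed

end



lemma inv_sq_int:
  fixes u K :: real
  assumes "0 < u + K"
  shows "set_integrable lborel {u<..} (\<lambda>g. 1 / (g + K)\<^sup>2)"
    and "(LINT g:{u<..}|lborel. 1 / (g + K)\<^sup>2) = 1 / (u + K)"
proof -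
  let ?F = "\<lambda>x. - 1 / (x + K)"
  have D: "DERIV ?F x :> 1 / (x + K)\<^sup>2" if "ereal u < ereal x" for x
  proof -
    have "x + K \<noteq> 0" using that assms by simp
    then show ?thesis
      by (auto intro!: derivative_eq_intros simp: power2_eq_square)
  qed
  have C: "isCont (\<lambda>g. 1 / (g + K)\<^sup>2) x" if "ereal u < ereal x" for x
  proof -
    have "x + K \<noteq> 0" using that assms by simp
    then show ?thesis by (intro continuous_intros) auto
  qed
  have N: "AE x in lborel. ereal u < ereal x \<longrightarrow> ereal x < \<infinity> \<longrightarrow> 0 \<le> 1 / (x + K)\<^sup>2"
    by auto
  have A: "((?F \<circ> real_of_ereal) \<longlongrightarrow> - 1 / (u + K)) (at_right (ereal u))"
  proof -
    have "isCont ?F u" using assms by (intro continuous_intros) auto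
    then have "(?F \<longlongrightarrow> ?F u) (at u)" by (simp add: isCont_def)
    then show ?thesis unfolding ereal_tendsto_simps1 by (rule tendsto_within_subset) auto
  qed
  have B: "((?F \<circ> real_of_ereal) \<longlongrightarrow> 0) (at_left \<infinity>)"
    unfolding ereal_tendsto_simps1
  proof -
    have "filterlim (\<lambda>x. K + x) at_top at_top"
      by (rule filterlim_tendsto_add_at_top[OF tendsto_const filterlim_ident])
    then have "filterlim (\<lambda>x. x + K) at_top at_top" by (simp add: add.commute)
    then show "(?F \<longlongrightarrow> 0) at_top"
      by (intro tendsto_divide_0[OF tendsto_const] filterlim_at_top_imp_at_infinity)
  qed
  note R = interval_integral_FTC_nonneg[of "ereal u" \<infinity>, OF _ D C N A B]
  show "set_integrable lborel {u<..} (\<lambda>g. 1 / (g + K)\<^sup>2)" using R(1) by simp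
  show "(LINT g:{u<..}|lborel. 1 / (g + K)\<^sup>2) = 1 / (u + K)"
    using R(2) by (simp add: interval_integral_to_infinity_eq)
qed




lemma set_nonneg:
  fixes f :: "real \<Rightarrow> real"
  assumes "\<And>x. x \<in> A \<Longrightarrow> 0 \<le> f x"
  shows "0 \<le> (LINT x:A|M. f x)"
  unfolding set_lebesgue_integral_def
  by (rule Bochner_Integration.integral_nonneg) (use assms in \<open>auto simp: indicator_def\<close>)

lemma quad_deriv:
  fixes R :: "real \<Rightarrow> real"
  assumes "R u = 0" "\<And>y. y \<in> S \<Longrightarrow> \<bar>R y\<bar> \<le> K * (y - u)\<^sup>2"
  shows "(R has_real_derivative 0) (at u within S)"
  unfolding has_field_derivative_iff
proof (rule Lim_null_comparison)
  show "\<forall>\<^sub>F y in at u within S. norm ((R y - R u) / (y - u)) \<le> K * \<bar>y - u\<bar>"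
    unfolding eventually_at_filter
  proof (intro always_eventually allI impI)
    fix y assume "y \<noteq> u" "y \<in> S"
    then have "\<bar>R y\<bar> \<le> K * \<bar>y - u\<bar> * \<bar>y - u\<bar>" using assms(2)[of y]
      by (simp add: power2_eq_square abs_mult_self_eq)
    then show "norm ((R y - R u) / (y - u)) \<le> K * \<bar>y - u\<bar>" using \<open>y \<noteq> u\<close> assms(1)
      by (simp add: abs_divide divide_le_eq)
  qed
  have "((\<lambda>y. K * \<bar>y - u\<bar>) \<longlongrightarrow> K * \<bar>u - u\<bar>) (at u within S)"
    by (intro tendsto_intros)
  then show "((\<lambda>y. K * \<bar>y - u\<bar>) \<longlongrightarrow> 0) (at u within S)" by simp
qed

context dens begin

lemma tail_split:
  fixes f :: "real \<Rightarrow> real"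
  assumes "set_integrable lborel {0..} f" "0 \<le> y"
  shows "(LINT g:{y<..}|lborel. f g) = (LINT g:{0..}|lborel. f g) - integral {0..y} f"
proof -
  have i1: "set_integrable lborel {0..y} f" by (rule set_integrable_subset[OF assms(1)]) auto
  have i2: "set_integrable lborel {y<..} f" by (rule set_integrable_subset[OF assms(1)]) (use assms in auto)
  have e: "{0..} = {0..y} \<union> {y<..}" using assms by auto
  have "(LINT g:{0..y} \<union> {y<..}|lborel. f g) = (LINT g:{0..y}|lborel. f g) + (LINT g:{y<..}|lborel. f g)"
    by (rule set_integral_Un[OF _ i1 i2]) auto
  then have "(LINT g:{0..}|lborel. f g) = (LINT g:{0..y}|lborel. f g) + (LINT g:{y<..}|lborel. f g)"
    by (simp only: e[symmetric])
  moreover have "(LINT g:{0..y}|lborel. f g) = integral {0..y} f"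
    by (rule set_borel_integral_eq_integral(2)[OF i1])
  ultimately show ?thesis by simp
qed

lemma tail_deriv:
  assumes hm: "h \<in> borel_measurable lborel" and hc: "continuous_on {0..} h"
    and hb: "\<And>g. 0 \<le> g \<Longrightarrow> \<bar>h g\<bar> \<le> B" and x: "0 \<le> x" "x \<le> b"
  shows "((\<lambda>y. LINT g:{y<..}|lborel. p g * h g) has_real_derivative -(p x * h x)) (at x within {0..b})"
proof -
  have I0: "set_integrable lborel {0..} (\<lambda>g. p g * h g)"
    by (rule int_bdd[OF _ _ hm, of _ B]) (use hb in auto)
  have cont: "continuous_on {0..b} (\<lambda>g. p g * h g)"
    by (intro continuous_intros continuous_on_subset[OF p_cont] continuous_on_subset[OF hc]) auto
  have "((\<lambda>y. (LINT g:{0..}|lborel. p g * h g) - integral {0..y} (\<lambda>g. p g * h g)) has_real_derivative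
        0 - (p x * h x)) (at x within {0..b})"
    by (intro derivative_intros integral_has_real_derivative[OF cont]) (use x in auto)
  then have D2: "((\<lambda>y. (LINT g:{0..}|lborel. p g * h g) - integral {0..y} (\<lambda>g. p g * h g)) has_real_derivative
        -(p x * h x)) (at x within {0..b})" by simp
  show ?thesis
  proof (rule has_field_derivative_transform_within[OF D2, where d=1])
    fix y assume "y \<in> {0..b}"
    then show "(LINT g:{0..}|lborel. p g * h g) - integral {0..y} (\<lambda>g. p g * h g)
               = (LINT g:{y<..}|lborel. p g * h g)"
      using tail_split[OF I0, of y] by simp
  qed (use x in auto)
qed

end



lemma alg_id:
  fixes a b :: real
  assumes "a \<noteq> 0" "b \<noteq> 0"
  shows "- 1 / b = - 1 / a + (b - a) * (1 / a\<^sup>2) - (b - a)\<^sup>2 * (1 / (a\<^sup>2 * b))"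
  using assms by (simp add: field_simps power2_eq_square)

context dens begin

lemma D_pos: "0 \<le> x \<Longrightarrow> 0 < D x" using D_ge1[of x] by simp

lemma kf_bnd: assumes "0 \<le> u" "0 \<le> g" shows "0 \<le> kf u g" "kf u g \<le> 1"
proof -
  have "1 \<le> D u" using D_ge1[OF assms(1)] .
  then have a: "1 / (g + D u) \<le> 1 / (g + 1)" using assms by (intro divide_left_mono) auto
  have b: "0 \<le> 1 / (g + D u)" using \<open>1 \<le> D u\<close> assms by simp
  have c: "1 / (g + 1) \<le> 1" using assms by simp
  show "0 \<le> kf u g" "kf u g \<le> 1" unfolding kf_def using a b c by linarith+
qed

lemma kf_meas[measurable]: "kf u \<in> borel_measurable lborel"
  unfolding kf_def by measurable

lemma kf_cont: "0 \<le> u \<Longrightarrow> continuous_on {0..} (kf u)"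
  unfolding kf_def using D_ge1[of u]
  by (intro continuous_intros ballI) (use D_ge1[of u] in \<open>auto\<close>)

lemma kf_diag: assumes "0 \<le> u" shows "kf u u = c / (u + D u)"
proof -
  have e: "u + D u = (1 + u) * (1 + c)" by (simp add: D_def algebra_simps)
  have p: "0 < 1 + c" "0 < 1 + u" using c_pos assms by auto
  have "1 / (u + 1) - 1 / ((1 + u) * (1 + c)) = ((1+c) - 1) / ((1 + u) * (1 + c))"
    using p by (simp add: divide_simps add.commute)
  then show ?thesis unfolding kf_def e by simp
qed

lemma kf_decomp:
  assumes "0 \<le> u" "0 \<le> y" "0 \<le> g"
  shows "kf y g = kf u g + c * (y - u) * (1 / (g + D u)\<^sup>2)
           - c\<^sup>2 * (y - u)\<^sup>2 * (1 / ((g + D u)\<^sup>2 * (g + D y)))"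
proof -
  have a: "g + D u \<noteq> 0" "g + D y \<noteq> 0" using D_pos assms by (smt (verit))+
  have e: "(g + D y) - (g + D u) = c * (y - u)" by (simp add: D_def algebra_simps)
  have "- 1 / (g + D y) = - 1 / (g + D u) + c * (y - u) * (1 / (g + D u)\<^sup>2)
           - (c * (y - u))\<^sup>2 * (1 / ((g + D u)\<^sup>2 * (g + D y)))"
    using alg_id[OF a] unfolding e .
  then show ?thesis unfolding kf_def by (simp add: power_mult_distrib)
qed

end



context dens begin

definition I0 :: real where "I0 = (LINT g:{0..}|lborel. p g)"

lemma tail_le_I0:
  assumes "0 \<le> y" "h \<in> borel_measurable lborel" "\<And>g. 0 \<le> g \<Longrightarrow> 0 \<le> h g \<and> h g \<le> 1"
  shows "0 \<le> (LINT g:{y<..}|lborel. p g * h g)" "(LINT g:{y<..}|lborel. p g * h g) \<le> I0"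
proof -
  have i1: "set_integrable lborel {y<..} (\<lambda>g. p g * h g)"
  proof (rule int_bdd[OF _ _ assms(2), of _ 1])
    fix g assume "g \<in> {y<..}"
    then have "0 \<le> h g \<and> h g \<le> 1" using assms(1) assms(3)[of g] by auto
    then show "\<bar>h g\<bar> \<le> 1" by simp
  qed (use assms(1) in auto)
  have i2: "set_integrable lborel {y<..} p"
    by (rule set_integrable_subset[OF p_int]) (use assms(1) in auto)
  show "0 \<le> (LINT g:{y<..}|lborel. p g * h g)"
  proof (rule set_nonneg)
    fix g assume "g \<in> {y<..}"
    then have "0 \<le> h g" using assms(1) assms(3)[of g] by auto
    then show "0 \<le> p g * h g" using p_nn[of g] by simp
  qed
  have "(LINT g:{y<..}|lborel. p g * h g) \<le> (LINT g:{y<..}|lborel. p g)"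
  proof (rule set_integral_mono[OF i1 i2])
    fix g assume "g \<in> {y<..}"
    then have "h g \<le> 1" using assms(1) assms(3)[of g] by auto
    then show "p g * h g \<le> p g" using p_nn[of g] by (rule mult_left_le)
  qed
  also have "\<dots> = I0 - integral {0..y} p"
    unfolding I0_def by (rule tail_split[OF p_int assms(1)])
  also have "\<dots> \<le> I0"
  proof -
    have "p integrable_on {0..y}"
      by (rule set_borel_integral_eq_integral(1)[OF set_integrable_subset[OF p_int]]) auto
    then have "0 \<le> integral {0..y} p" by (rule integral_nonneg) (use p_nn in auto)
    then show ?thesis by simp
  qed
  finally show "(LINT g:{y<..}|lborel. p g * h g) \<le> I0" .
qed

end



context dens begin

lemma inv_le1: "1 \<le> (x::real) \<Longrightarrow> 0 \<le> 1 / x \<and> 1 / x \<le> 1"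
  by (auto simp: divide_le_eq)

lemma abs01: "0 \<le> (x::real) \<Longrightarrow> x \<le> 1 \<Longrightarrow> \<bar>x\<bar> \<le> 1" by simp

lemma F_deriv:
  assumes u: "0 \<le> u" "u \<le> b"
  shows "(F has_real_derivative c * Gs u) (at u within {0..b})"
proof -
  define h2 where "h2 = (\<lambda>g. 1 / (g + D u)\<^sup>2)"
  define h3 where "h3 = (\<lambda>y g. 1 / ((g + D u)\<^sup>2 * (g + D y)))"
  define Q1 where "Q1 = (\<lambda>y. LINT g:{y<..}|lborel. p g * kf u g)"
  define Q2 where "Q2 = (\<lambda>y. LINT g:{y<..}|lborel. p g * h2 g)"
  define R where "R = (\<lambda>y. c\<^sup>2 * (y - u)\<^sup>2 * (LINT g:{y<..}|lborel. p g * h3 y g))"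
  have h2m[measurable]: "h2 \<in> borel_measurable lborel" unfolding h2_def by measurable
  have h3m[measurable]: "h3 y \<in> borel_measurable lborel" for y unfolding h3_def by measurable
  have h2b: "0 \<le> h2 g \<and> h2 g \<le> 1" if "0 \<le> g" for g
  proof -
    have "1 \<le> g + D u" using D_ge1[OF u(1)] that by simp
    then have "1 \<le> (g + D u)\<^sup>2" by (simp add: one_le_power)
    then show ?thesis unfolding h2_def by (rule inv_le1)
  qed
  have h3b: "0 \<le> h3 y g \<and> h3 y g \<le> 1" if "0 \<le> g" "0 \<le> y" for g y
  proof -
    have a: "1 \<le> g + D u" "1 \<le> g + D y" using D_ge1[OF u(1)] D_ge1[OF that(2)] that by simp_all
    then have "1 \<le> (g + D u)\<^sup>2" by (simp add: one_le_power)
    then have "1 * 1 \<le> (g + D u)\<^sup>2 * (g + D y)" using a(2) by (intro mult_mono) auto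
    then show ?thesis unfolding h3_def by (intro inv_le1) simp
  qed
  have h2c: "continuous_on {0..} h2" unfolding h2_def
  proof (intro continuous_intros ballI)
    fix x :: real assume "x \<in> {0..}"
    then show "(x + D u)\<^sup>2 \<noteq> 0" using D_ge1[OF u(1)] by simp
  qed
  have dQ1: "(Q1 has_real_derivative -(p u * kf u u)) (at u within {0..b})"
    unfolding Q1_def
  proof (rule tail_deriv[OF kf_meas[of u] kf_cont[OF u(1)] _ u, where B=1])
    fix g :: real assume "0 \<le> g"
    then show "\<bar>kf u g\<bar> \<le> 1" using kf_bnd[OF u(1), of g] by (intro abs01) auto
  qed
  have dQ2: "(Q2 has_real_derivative -(p u * h2 u)) (at u within {0..b})"
    unfolding Q2_def
  proof (rule tail_deriv[OF h2m h2c _ u, where B=1])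
    fix g :: real assume "0 \<le> g"
    then show "\<bar>h2 g\<bar> \<le> 1" using h2b[of g] by (intro abs01) auto
  qed
  have dR: "(R has_real_derivative 0) (at u within {0..b})"
  proof (rule quad_deriv[where K = "c\<^sup>2 * I0"])
    show "R u = 0" unfolding R_def by simp
    fix y assume y: "y \<in> {0..b}"
    have yy: "0 \<le> y" using y by simp
    have J: "0 \<le> (LINT g:{y<..}|lborel. p g * h3 y g)" "(LINT g:{y<..}|lborel. p g * h3 y g) \<le> I0"
      using tail_le_I0[OF yy h3m, of y] h3b[OF _ yy] by auto
    have "\<bar>R y\<bar> = c\<^sup>2 * (y - u)\<^sup>2 * (LINT g:{y<..}|lborel. p g * h3 y g)"
      unfolding R_def using J by (simp add: abs_mult)
    also have "\<dots> \<le> c\<^sup>2 * (y - u)\<^sup>2 * I0" using J by (intro mult_left_mono) auto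
    finally show "\<bar>R y\<bar> \<le> c\<^sup>2 * I0 * (y - u)\<^sup>2" by (simp add: mult_ac)
  qed
  have eq: "F y = Q1 y + c * (y - u) * Q2 y - R y" if y: "y \<in> {0..b}" for y
  proof -
    have yy: "0 \<le> y" using y by simp
    have i1: "set_integrable lborel {y<..} (\<lambda>g. p g * kf u g)"
    proof (rule int_bdd[OF _ _ kf_meas[of u], where B=1])
      fix g :: real assume "g \<in> {y<..}"
      then show "\<bar>kf u g\<bar> \<le> 1" using yy kf_bnd[OF u(1), of g] by (intro abs01) auto
    qed (use yy in auto)
    have i2: "set_integrable lborel {y<..} (\<lambda>g. p g * h2 g)"
    proof (rule int_bdd[OF _ _ h2m, where B=1])
      fix g :: real assume "g \<in> {y<..}"
      then show "\<bar>h2 g\<bar> \<le> 1" using yy h2b[of g] by (intro abs01) auto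
    qed (use yy in auto)
    have i3: "set_integrable lborel {y<..} (\<lambda>g. p g * h3 y g)"
    proof (rule int_bdd[OF _ _ h3m[of y], where B=1])
      fix g :: real assume "g \<in> {y<..}"
      then show "\<bar>h3 y g\<bar> \<le> 1" using yy h3b[of g y] by (intro abs01) auto
    qed (use yy in auto)
    have "F y = (LINT g:{y<..}|lborel. p g * kf u g + c * (y - u) * (p g * h2 g) - c\<^sup>2 * (y - u)\<^sup>2 * (p g * h3 y g))"
      unfolding F_def
    proof (rule set_lebesgue_integral_cong, simp, intro allI impI)
      fix g assume "g \<in> {y<..}"
      then have "0 \<le> g" using yy by auto
      have "p g * kf y g = p g * (kf u g + c * (y - u) * (1 / (g + D u)\<^sup>2)
           - c\<^sup>2 * (y - u)\<^sup>2 * (1 / ((g + D u)\<^sup>2 * (g + D y))))"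
        using kf_decomp[OF u(1) yy \<open>0 \<le> g\<close>] by simp
      then show "p g * kf y g = p g * kf u g + c * (y - u) * (p g * h2 g) - c\<^sup>2 * (y - u)\<^sup>2 * (p g * h3 y g)"
        unfolding h2_def h3_def by (simp only: distrib_left right_diff_distrib mult_ac)
    qed
    also have "\<dots> = Q1 y + c * (y - u) * Q2 y - R y"
      unfolding Q1_def Q2_def R_def
      using i1 i2 i3 by (simp add: set_integral_add set_integral_diff)
    finally show ?thesis .
  qed
  have dL: "((\<lambda>z. c * (z - u)) has_real_derivative c) (at u within {0..b})"
    by (auto intro!: derivative_eq_intros)
  have dP: "((\<lambda>z. c * (z - u) * Q2 z) has_real_derivative c * Q2 u + -(p u * h2 u) * (c * (u - u))) (at u within {0..b})"
    by (rule DERIV_mult[OF dL dQ2])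
  have "((\<lambda>y. Q1 y + c * (y - u) * Q2 y - R y) has_real_derivative
          -(p u * kf u u) + (c * Q2 u + -(p u * h2 u) * (c * (u - u))) - 0) (at u within {0..b})"
    by (intro DERIV_diff DERIV_add dQ1 dP dR)
  then have d: "((\<lambda>y. Q1 y + c * (y - u) * Q2 y - R y) has_real_derivative c * Gs u) (at u within {0..b})"
    using u by (simp add: kf_diag Gs_def Q2_def h2_def algebra_simps)
  show ?thesis
    by (rule has_field_derivative_transform_within[OF d, where d=1]) (use u eq in auto)
qed

end



lemma rat_le:
  fixes a b Ds K :: real
  assumes "0 \<le> a" "a \<le> b" "0 < Ds" "Ds \<le> K"
  shows "(a + Ds) / (a + K) \<le> (b + Ds) / (b + K)"
proof -
  have p: "0 < a + K" "0 < b + K" using assms by auto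
  have "(b + Ds) * (a + K) - (a + Ds) * (b + K) = (b - a) * (K - Ds)" by (simp add: algebra_simps)
  moreover have "0 \<le> (b - a) * (K - Ds)" using assms by simp
  ultimately have "(a + Ds) * (b + K) \<le> (b + Ds) * (a + K)" by linarith
  then show ?thesis using p by (simp add: divide_simps)
qed

lemma rat_ge:
  fixes a b Ds K :: real
  assumes "0 \<le> a" "a \<le> b" "0 < K" "K \<le> Ds"
  shows "(b + Ds) / (b + K) \<le> (a + Ds) / (a + K)"
proof -
  have p: "0 < a + K" "0 < b + K" using assms by auto
  have "(a + Ds) * (b + K) - (b + Ds) * (a + K) = (b - a) * (Ds - K)" by (simp add: algebra_simps)
  moreover have "0 \<le> (b - a) * (Ds - K)" using assms by simp
  ultimately have "(b + Ds) * (a + K) \<le> (a + Ds) * (b + K)" by linarith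
  then show ?thesis using p by (simp add: divide_simps)
qed

lemma ratio_split:
  fixes g Ds K q :: real
  assumes "0 < g + Ds" "0 < g + K"
  shows "q / (g + K)\<^sup>2 = ((g + Ds) / (g + K))\<^sup>2 * (q / (g + Ds)\<^sup>2)"
  using assms by (simp add: power_divide field_simps)

lemma sc_pt:
  fixes g r Ds K q :: real
  assumes "0 \<le> r" "0 \<le> g" "0 < Ds" "0 < K"
    and s1: "g < r \<Longrightarrow> 0 \<le> q" and s2: "r < g \<Longrightarrow> q \<le> 0"
  shows "Ds \<le> K \<Longrightarrow> q / (g + K)\<^sup>2 \<le> ((r + Ds) / (r + K))\<^sup>2 * (q / (g + Ds)\<^sup>2)"
    and "K \<le> Ds \<Longrightarrow> ((r + Ds) / (r + K))\<^sup>2 * (q / (g + Ds)\<^sup>2) \<le> q / (g + K)\<^sup>2"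
proof -
  have e: "q / (g + K)\<^sup>2 = ((g + Ds) / (g + K))\<^sup>2 * (q / (g + Ds)\<^sup>2)"
    by (rule ratio_split) (use assms in auto)
  have nn: "\<And>x. 0 \<le> x \<Longrightarrow> 0 \<le> (x + Ds) / (x + K)" using assms by simp
  show "Ds \<le> K \<Longrightarrow> q / (g + K)\<^sup>2 \<le> ((r + Ds) / (r + K))\<^sup>2 * (q / (g + Ds)\<^sup>2)"
  proof -
    assume DK: "Ds \<le> K"
    consider "g < r" | "g = r" | "r < g" by linarith
    then show ?thesis
    proof cases
      case 1
      have "((g + Ds) / (g + K))\<^sup>2 \<le> ((r + Ds) / (r + K))\<^sup>2"
        by (rule power_mono[OF rat_le nn]) (use assms 1 DK in auto)
      moreover have "0 \<le> q / (g + Ds)\<^sup>2" using s1[OF 1] by simp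
      ultimately show ?thesis unfolding e by (rule mult_right_mono)
    next
      case 2 then show ?thesis unfolding e by simp
    next
      case 3
      have "((r + Ds) / (r + K))\<^sup>2 \<le> ((g + Ds) / (g + K))\<^sup>2"
        by (rule power_mono[OF rat_le nn]) (use assms 3 DK in auto)
      moreover have "q / (g + Ds)\<^sup>2 \<le> 0" using s2[OF 3] by (intro divide_nonpos_nonneg) auto
      ultimately show ?thesis unfolding e by (rule mult_right_mono_neg)
    qed
  qed
  show "K \<le> Ds \<Longrightarrow> ((r + Ds) / (r + K))\<^sup>2 * (q / (g + Ds)\<^sup>2) \<le> q / (g + K)\<^sup>2"
  proof -
    assume DK: "K \<le> Ds"
    consider "g < r" | "g = r" | "r < g" by linarith
    then show ?thesis
    proof cases
      case 1
      have "((r + Ds) / (r + K))\<^sup>2 \<le> ((g + Ds) / (g + K))\<^sup>2"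
        by (rule power_mono[OF rat_ge nn]) (use assms 1 DK in auto)
      moreover have "0 \<le> q / (g + Ds)\<^sup>2" using s1[OF 1] by simp
      ultimately show ?thesis unfolding e by (rule mult_right_mono)
    next
      case 2 then show ?thesis unfolding e by simp
    next
      case 3
      have "((g + Ds) / (g + K))\<^sup>2 \<le> ((r + Ds) / (r + K))\<^sup>2"
        by (rule power_mono[OF rat_ge nn]) (use assms 3 DK in auto)
      moreover have "q / (g + Ds)\<^sup>2 \<le> 0" using s2[OF 3] by (intro divide_nonpos_nonneg) auto
      ultimately show ?thesis unfolding e by (rule mult_right_mono_neg)
    qed
  qed
qed




context dens begin

lemma intq:
  assumes "0 \<le> x" "1 \<le> K"
  shows "set_integrable lborel {x<..} (\<lambda>g. (p g - \<beta>) / (g + K)\<^sup>2)"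
proof -
  have m: "(\<lambda>g. 1 / (g + K)\<^sup>2) \<in> borel_measurable lborel" by measurable
  have i1: "set_integrable lborel {x<..} (\<lambda>g. p g * (1 / (g + K)\<^sup>2))"
  proof (rule int_bdd[OF _ _ m, where B=1])
    fix g :: real assume "g \<in> {x<..}"
    then have "1 \<le> g + K" using assms by auto
    then have "1 \<le> (g + K)\<^sup>2" by (simp add: one_le_power)
    then have "0 \<le> 1 / (g + K)\<^sup>2 \<and> 1 / (g + K)\<^sup>2 \<le> 1" by (rule inv_le1)
    then show "\<bar>1 / (g + K)\<^sup>2\<bar> \<le> 1" by (intro abs01) auto
  qed (use assms(1) in auto)
  have i2: "set_integrable lborel {x<..} (\<lambda>g. \<beta> * (1 / (g + K)\<^sup>2))"
    by (rule set_integrable_mult_right, rule inv_sq_int(1)) (use assms in auto)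
  have "set_integrable lborel {x<..} (\<lambda>g. p g * (1 / (g + K)\<^sup>2) - \<beta> * (1 / (g + K)\<^sup>2))"
    by (rule set_integral_diff(1)[OF i1 i2])
  moreover have "(\<lambda>g. p g * (1 / (g + K)\<^sup>2) - \<beta> * (1 / (g + K)\<^sup>2)) = (\<lambda>g. (p g - \<beta>) / (g + K)\<^sup>2)"
    by (auto simp: diff_divide_distrib)
  ultimately show ?thesis by simp
qed

lemma Gs_eq:
  assumes "0 \<le> x"
  shows "Gs x = (LINT g:{x<..}|lborel. (p g - p x) / (g + D x)\<^sup>2)"
proof -
  have K: "1 \<le> D x" by (rule D_ge1[OF assms])
  have i1: "set_integrable lborel {x<..} (\<lambda>g. (p g - 0) / (g + D x)\<^sup>2)" by (rule intq[OF assms K])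
  have i2: "set_integrable lborel {x<..} (\<lambda>g. p x * (1 / (g + D x)\<^sup>2))"
    by (rule set_integrable_mult_right, rule inv_sq_int(1)) (use assms K in auto)
  have A: "(LINT g:{x<..}|lborel. (p g - p x) / (g + D x)\<^sup>2)
        = (LINT g:{x<..}|lborel. (p g - 0) / (g + D x)\<^sup>2 - p x * (1 / (g + D x)\<^sup>2))"
    by (rule set_lebesgue_integral_cong) (auto simp: diff_divide_distrib)
  have B: "(LINT g:{x<..}|lborel. (p g - 0) / (g + D x)\<^sup>2 - p x * (1 / (g + D x)\<^sup>2))
     = (LINT g:{x<..}|lborel. (p g - 0) / (g + D x)\<^sup>2) - (LINT g:{x<..}|lborel. p x * (1 / (g + D x)\<^sup>2))"
    by (rule set_integral_diff(2)[OF i1 i2])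
  have C: "(LINT g:{x<..}|lborel. p x * (1 / (g + D x)\<^sup>2)) = p x * (1 / (x + D x))"
    using set_integral_mult_right[where a="p x" and A="{x<..}" and M=lborel and f="\<lambda>g. 1 / (g + D x)\<^sup>2"] inv_sq_int(2)[of x "D x"] assms K
    by simp
  show ?thesis unfolding A B C Gs_def by simp
qed

lemma split_int:
  fixes f :: "real \<Rightarrow> real"
  assumes "set_integrable lborel {a<..} f" "a \<le> b"
  shows "(LINT g:{a<..}|lborel. f g) = (LINT g:{a<..b}|lborel. f g) + (LINT g:{b<..}|lborel. f g)"
proof -
  have i1: "set_integrable lborel {a<..b} f" by (rule set_integrable_subset[OF assms(1)]) auto
  have i2: "set_integrable lborel {b<..} f" by (rule set_integrable_subset[OF assms(1)]) (use assms(2) in auto)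
  have e: "{a<..} = {a<..b} \<union> {b<..}" using assms(2) by auto
  have "(LINT g:{a<..b} \<union> {b<..}|lborel. f g) = (LINT g:{a<..b}|lborel. f g) + (LINT g:{b<..}|lborel. f g)"
    by (rule set_integral_Un[OF _ i1 i2]) auto
  then show ?thesis by (simp only: e[symmetric])
qed

lemma sc_exists:
  assumes tt: "0 \<le> tt" "\<alpha> \<le> p tt" and ex: "\<exists>g>tt. p g < \<alpha>"
  shows "\<exists>r\<ge>tt. \<forall>g>tt. (g < r \<longrightarrow> \<alpha> \<le> p g) \<and> (r < g \<longrightarrow> p g \<le> \<alpha>)"
proof -
  define N where "N = {g. tt < g \<and> p g < \<alpha>}"
  have ne: "N \<noteq> {}" using ex by (auto simp: N_def)
  have bb: "bdd_below N" unfolding N_def by (rule bdd_belowI[of _ tt]) auto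
  define r where "r = Inf N"
  have "tt \<le> r" unfolding r_def by (rule cInf_greatest[OF ne]) (auto simp: N_def)
  moreover have "\<forall>g>tt. (g < r \<longrightarrow> \<alpha> \<le> p g) \<and> (r < g \<longrightarrow> p g \<le> \<alpha>)"
  proof (intro allI impI conjI)
    fix g assume g: "tt < g"
    show "g < r \<Longrightarrow> \<alpha> \<le> p g"
    proof (rule ccontr)
      assume "g < r" "\<not> \<alpha> \<le> p g"
      then have "g \<in> N" using g by (auto simp: N_def)
      then have "r \<le> g" unfolding r_def by (rule cInf_lower[OF _ bb])
      with \<open>g < r\<close> show False by simp
    qed
    show "r < g \<Longrightarrow> p g \<le> \<alpha>"
    proof -
      assume "r < g"
      then obtain n where n: "n \<in> N" "n < g" using cInf_less_iff[OF ne bb] unfolding r_def by auto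
      then have "tt < n" "p n < \<alpha>" by (auto simp: N_def)
      have "min (p tt) (p g) \<le> p n" by (rule qc_mid[OF p_qc tt(1)]) (use \<open>tt < n\<close> n in auto)
      then show "p g \<le> \<alpha>" using tt(2) \<open>p n < \<alpha>\<close> by linarith
    qed
  qed
  ultimately show ?thesis by blast
qed

end



context dens begin

lemma D_mono: "x \<le> y \<Longrightarrow> D x \<le> D y" using c_pos by (simp add: D_def)

lemma F_cont: "0 \<le> b \<Longrightarrow> continuous_on {0..b} F"
  unfolding continuous_on_eq_continuous_within
proof
  fix x assume "x \<in> {0..b}"
  then have "(F has_real_derivative c * Gs x) (at x within {0..b})" by (intro F_deriv) auto
  then show "continuous (at x within {0..b}) F" by (rule DERIV_continuous)
qed

lemma F_deriv_at: "0 < x \<Longrightarrow> x < b \<Longrightarrow> DERIV F x :> c * Gs x"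
proof -
  assume x: "0 < x" "x < b"
  have "(F has_real_derivative c * Gs x) (at x within {0..b})" by (rule F_deriv) (use x in auto)
  moreover have "at x within {0..b} = at x" by (rule at_within_interior) (use x in auto)
  ultimately show ?thesis by simp
qed

context
  fixes tt \<alpha> :: real
  assumes tt0: "0 \<le> tt" and ptt: "\<alpha> \<le> p tt"
    and below: "\<And>g. 0 \<le> g \<Longrightarrow> g < tt \<Longrightarrow> p g < \<alpha>"
    and targ: "(LINT g:{tt<..}|lborel. (p g - \<alpha>) / (g + D tt)\<^sup>2) = 0"
begin

lemma fint: "set_integrable lborel {tt<..} (\<lambda>g. (p g - \<alpha>) / (g + D tt)\<^sup>2)"
  by (rule intq[OF tt0 D_ge1[OF tt0]])

lemma Gs_nonpos:
  assumes x: "tt < x" shows "Gs x \<le> 0"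
proof -
  have x0: "0 \<le> x" using x tt0 by simp
  have Dx: "D tt \<le> D x" "1 \<le> D x" "0 < D tt" using D_mono[of tt x] x D_ge1[OF x0] D_pos[OF tt0] by auto
  show ?thesis
  proof (cases "p x < \<alpha>")
    case True
    have "Gs x = (LINT g:{x<..}|lborel. (p g - p x) / (g + D x)\<^sup>2)" by (rule Gs_eq[OF x0])
    also have "\<dots> \<le> (LINT g:{x<..}|lborel. 0)"
    proof (rule set_integral_mono[OF intq[OF x0 Dx(2)]])
      show "set_integrable lborel {x<..} (\<lambda>g. 0::real)" by (simp add: set_integrable_def)
      fix g assume g: "g \<in> {x<..}"
      have "min (p tt) (p g) \<le> p x" by (rule qc_mid[OF p_qc tt0]) (use x g in auto)
      then have "p g - p x \<le> 0" using True ptt by linarith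
      then show "(p g - p x) / (g + D x)\<^sup>2 \<le> 0" by (intro divide_nonpos_nonneg) auto
    qed
    finally show ?thesis by simp
  next
    case False
    then have px: "\<alpha> \<le> p x" by simp
    let ?f = "\<lambda>g. (p g - \<alpha>) / (g + D tt)\<^sup>2"
    have fx: "set_integrable lborel {x<..} ?f" by (rule intq[OF x0 D_ge1[OF tt0]])
    have s1: "Gs x \<le> (LINT g:{x<..}|lborel. (p g - \<alpha>) / (g + D x)\<^sup>2)"
      unfolding Gs_eq[OF x0]
    proof (rule set_integral_mono[OF intq[OF x0 Dx(2)] intq[OF x0 Dx(2)]])
      fix g assume "g \<in> {x<..}"
      show "(p g - p x) / (g + D x)\<^sup>2 \<le> (p g - \<alpha>) / (g + D x)\<^sup>2"
        using px by (intro divide_right_mono) auto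
    qed
    have s2: "(LINT g:{x<..}|lborel. ?f g) \<le> 0"
    proof -
      have "0 = (LINT g:{tt<..x}|lborel. ?f g) + (LINT g:{x<..}|lborel. ?f g)"
        using split_int[OF fint, of x] targ x by simp
      moreover have "0 \<le> (LINT g:{tt<..x}|lborel. ?f g)"
      proof (rule set_nonneg)
        fix g assume g: "g \<in> {tt<..x}"
        have "min (p tt) (p x) \<le> p g" by (rule qc_mid[OF p_qc tt0]) (use g in auto)
        then have "0 \<le> p g - \<alpha>" using ptt px by linarith
        then show "0 \<le> ?f g" by simp
      qed
      ultimately show ?thesis by linarith
    qed
    show ?thesis
    proof (cases "\<exists>g>tt. p g < \<alpha>")
      case True
      obtain r where r: "tt \<le> r" "\<And>g. tt < g \<Longrightarrow> g < r \<Longrightarrow> \<alpha> \<le> p g" "\<And>g. tt < g \<Longrightarrow> r < g \<Longrightarrow> p g \<le> \<alpha>"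
        using sc_exists[OF tt0 ptt True] by blast
      define wr where "wr = ((r + D tt) / (r + D x))\<^sup>2"
      have "(LINT g:{x<..}|lborel. (p g - \<alpha>) / (g + D x)\<^sup>2) \<le> (LINT g:{x<..}|lborel. wr * ?f g)"
      proof (rule set_integral_mono[OF intq[OF x0 Dx(2)]])
        show "set_integrable lborel {x<..} (\<lambda>g. wr * ?f g)" by (rule set_integrable_mult_right, rule fx)
        fix g assume g: "g \<in> {x<..}"
        show "(p g - \<alpha>) / (g + D x)\<^sup>2 \<le> wr * ?f g" unfolding wr_def
          by (rule sc_pt(1)) (use g x tt0 r Dx in auto)
      qed
      also have "\<dots> = wr * (LINT g:{x<..}|lborel. ?f g)" by (rule set_integral_mult_right)
      also have "\<dots> \<le> 0" using s2 by (intro mult_nonneg_nonpos) (auto simp: wr_def)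
      finally show ?thesis using s1 by simp
    next
      case False
      have "(LINT g:{x<..}|lborel. (p g - \<alpha>) / (g + D x)\<^sup>2) \<le> (LINT g:{x<..}|lborel. ?f g)"
      proof (rule set_integral_mono[OF intq[OF x0 Dx(2)] fx])
        fix g assume g: "g \<in> {x<..}"
        then have "tt < g" using x by simp
        then have "\<not> p g < \<alpha>" using False by blast
        then have "0 \<le> p g - \<alpha>" by simp
        moreover have "(g + D tt)\<^sup>2 \<le> (g + D x)\<^sup>2" using g x0 Dx by (intro power_mono) auto
        moreover have "0 < (g + D x)\<^sup>2 * (g + D tt)\<^sup>2" using g x0 Dx by auto
        ultimately show "(p g - \<alpha>) / (g + D x)\<^sup>2 \<le> ?f g" by (intro divide_left_mono) auto
      qed
      then show ?thesis using s1 s2 by simp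
    qed
  qed
qed

lemma Gs_nonneg:
  assumes x: "0 \<le> x" "x < tt" shows "0 \<le> Gs x"
proof -
  have px: "p x < \<alpha>" by (rule below[OF x])
  have Dx: "D x \<le> D tt" "1 \<le> D x" "0 < D tt" using D_mono[of x tt] x D_ge1[OF x(1)] D_pos[OF tt0] by auto
  let ?h = "\<lambda>g. (p g - p x) / (g + D x)\<^sup>2"
  let ?f = "\<lambda>g. (p g - \<alpha>) / (g + D tt)\<^sup>2"
  have "Gs x = (LINT g:{x<..tt}|lborel. ?h g) + (LINT g:{tt<..}|lborel. ?h g)"
    unfolding Gs_eq[OF x(1)] by (rule split_int[OF intq[OF x(1) Dx(2)]]) (use x in auto)
  moreover have "0 \<le> (LINT g:{x<..tt}|lborel. ?h g)"
  proof (rule set_nonneg)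
    fix g assume g: "g \<in> {x<..tt}"
    have "min (p x) (p tt) \<le> p g" by (rule qc_mid[OF p_qc x(1)]) (use g in auto)
    then have "0 \<le> p g - p x" using ptt px by linarith
    then show "0 \<le> ?h g" by simp
  qed
  moreover have "0 \<le> (LINT g:{tt<..}|lborel. ?h g)"
  proof -
    have s1: "(LINT g:{tt<..}|lborel. (p g - \<alpha>) / (g + D x)\<^sup>2) \<le> (LINT g:{tt<..}|lborel. ?h g)"
    proof (rule set_integral_mono[OF intq[OF tt0 Dx(2)] intq[OF tt0 Dx(2)]])
      fix g assume "g \<in> {tt<..}"
      show "(p g - \<alpha>) / (g + D x)\<^sup>2 \<le> ?h g" using px by (intro divide_right_mono) auto
    qed
    have "0 \<le> (LINT g:{tt<..}|lborel. (p g - \<alpha>) / (g + D x)\<^sup>2)"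
    proof (cases "\<exists>g>tt. p g < \<alpha>")
      case True
      obtain r where r: "tt \<le> r" "\<And>g. tt < g \<Longrightarrow> g < r \<Longrightarrow> \<alpha> \<le> p g" "\<And>g. tt < g \<Longrightarrow> r < g \<Longrightarrow> p g \<le> \<alpha>"
        using sc_exists[OF tt0 ptt True] by blast
      define wr where "wr = ((r + D tt) / (r + D x))\<^sup>2"
      have "0 = wr * (LINT g:{tt<..}|lborel. ?f g)" using targ by simp
      also have "\<dots> = (LINT g:{tt<..}|lborel. wr * ?f g)" by (rule set_integral_mult_right[symmetric])
      also have "\<dots> \<le> (LINT g:{tt<..}|lborel. (p g - \<alpha>) / (g + D x)\<^sup>2)"
      proof (rule set_integral_mono[OF _ intq[OF tt0 Dx(2)]])
        show "set_integrable lborel {tt<..} (\<lambda>g. wr * ?f g)" by (rule set_integrable_mult_right, rule fint)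
        fix g assume g: "g \<in> {tt<..}"
        show "wr * ?f g \<le> (p g - \<alpha>) / (g + D x)\<^sup>2" unfolding wr_def
          by (rule sc_pt(2)) (use g x tt0 r Dx in auto)
      qed
      finally show ?thesis .
    next
      case False
      show ?thesis
      proof (rule set_nonneg)
        fix g assume g: "g \<in> {tt<..}"
        then have "tt < g" by simp
        then have "\<not> p g < \<alpha>" using False by blast
        then have "0 \<le> p g - \<alpha>" by simp
        then show "0 \<le> (p g - \<alpha>) / (g + D x)\<^sup>2" by simp
      qed
    qed
    then show ?thesis using s1 by simp
  qed
  ultimately show ?thesis by simp
qed

lemma F_le_max:
  assumes T: "0 \<le> T" shows "F T \<le> F tt"
proof (cases "T \<le> tt")
  case True
  show ?thesis
  proof (rule DERIV_nonneg_imp_increasing_open[OF True])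
    fix x assume x: "T < x" "x < tt"
    then have "DERIV F x :> c * Gs x" using T by (intro F_deriv_at) auto
    moreover have "0 \<le> c * Gs x" using Gs_nonneg[of x] x T c_pos by simp
    ultimately show "\<exists>y. DERIV F x :> y \<and> 0 \<le> y" by blast
  next
    show "continuous_on {T..tt} F" by (rule continuous_on_subset[OF F_cont[OF tt0]]) (use T in auto)
  qed
next
  case False
  show ?thesis
  proof (rule DERIV_nonpos_imp_decreasing_open[of tt T F])
    show "tt \<le> T" using False by simp
    fix x assume x: "tt < x" "x < T"
    then have "DERIV F x :> c * Gs x" using tt0 by (intro F_deriv_at) auto
    moreover have "c * Gs x \<le> 0" using Gs_nonpos[of x] x c_pos by (simp add: mult_nonneg_nonpos)
    ultimately show "\<exists>y. DERIV F x :> y \<and> y \<le> 0" by blast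
  next
    show "continuous_on {tt..T} F" by (rule continuous_on_subset[OF F_cont[OF T]]) (use tt0 in auto)
  qed
qed

end
end



context dens begin

lemma set_int_subset_mono:
  assumes "set_integrable lborel B p" "A \<subseteq> B" "A \<in> sets lborel"
  shows "(LINT g:A|lborel. p g) \<le> (LINT g:B|lborel. p g)"
proof -
  have iA: "set_integrable lborel A p" by (rule set_integrable_subset[OF assms(1) assms(3,2)])
  show ?thesis
    using iA assms(1) unfolding set_lebesgue_integral_def set_integrable_def
    by (intro integral_mono) (use assms(2) p_nn in \<open>auto simp: indicator_def\<close>)
qed

lemma p_max:
  assumes I: "0 < I0"
  shows "\<exists>xm\<ge>0. \<forall>y\<ge>0. p y \<le> p xm"
proof -
  obtain x0 where x0: "0 \<le> x0" "0 < p x0"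
  proof (rule ccontr)
    assume "\<not> thesis"
    then have z: "\<And>x. 0 \<le> x \<Longrightarrow> p x = 0" using p_nn by (metis less_eq_real_def that)
    have "(\<lambda>x. indicator {0..} x *\<^sub>R p x) = (\<lambda>x. 0::real)" by (auto simp: indicator_def z)
    then have "I0 = 0" unfolding I0_def set_lebesgue_integral_def by simp
    then show False using I by simp
  qed
  define m where "m = p x0"
  have "\<exists>N\<ge>x0. \<forall>g\<ge>N. p g \<le> m"
  proof (rule ccontr)
    assume "\<not> ?thesis"
    then have big: "\<And>N. x0 \<le> N \<Longrightarrow> \<exists>g\<ge>N. m < p g" by (meson not_le)
    have ge: "m \<le> p y" if y: "x0 \<le> y" for y
    proof -
      obtain g where g: "y \<le> g" "m < p g" using big[OF y] by blast
      have "min (p x0) (p g) \<le> p y" by (rule qc_mid[OF p_qc x0(1) y g(1)])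
      then show ?thesis using g unfolding m_def by linarith
    qed
    define K where "K = I0 / m + 1"
    have "0 \<le> I0 / m" using I x0 by (simp add: m_def)
    then have K0: "0 < K" by (simp add: K_def)
    have "m * K \<le> (LINT g:{x0..x0+K}|lborel. p g)"
    proof -
      have "(LINT g:{x0..x0+K}|lborel. m) = m * K"
        using K0 by (simp add: set_integral_const)
      moreover have "(LINT g:{x0..x0+K}|lborel. m) \<le> (LINT g:{x0..x0+K}|lborel. p g)"
      proof (rule set_integral_mono)
        show "set_integrable lborel {x0..x0+K} (\<lambda>g. m)"
        proof -
          have "integrable lborel (indicator {x0..x0+K} :: real \<Rightarrow> real)"
            by (rule integrable_real_indicator) (use K0 in auto)
          then show ?thesis by (simp add: set_integrable_def)
        qed
        show "set_integrable lborel {x0..x0+K} p"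
          by (rule set_integrable_subset[OF p_int]) (use x0 in auto)
        fix g assume "g \<in> {x0..x0+K}" then show "m \<le> p g" using ge by auto
      qed
      ultimately show ?thesis by simp
    qed
    also have "\<dots> \<le> I0" unfolding I0_def by (rule set_int_subset_mono[OF p_int]) (use x0 in auto)
    finally have "m * K \<le> I0" .
    moreover have "m * K = I0 + m" using x0 by (simp add: K_def m_def field_simps)
    ultimately show False using x0 unfolding m_def by simp
  qed
  then obtain N where N: "x0 \<le> N" "\<And>g. N \<le> g \<Longrightarrow> p g \<le> m" by blast
  obtain xm where xm: "xm \<in> {0..N}" "\<And>y. y \<in> {0..N} \<Longrightarrow> p y \<le> p xm"
    using continuous_attains_sup[of "{0..N}" p] continuous_on_subset[OF p_cont] x0 N by force
  have "p x0 \<le> p xm" using xm(2)[of x0] x0 N by auto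
  then have "\<forall>y\<ge>0. p y \<le> p xm" using xm(2) N(2) unfolding m_def by (meson atLeastAtMost_iff linear order_trans)
  then show ?thesis using xm(1) by auto
qed

lemma gamma_props:
  assumes I: "0 < I0" and a: "a \<le> Sup (p ` {0..})"
  shows "0 \<le> gamma_l p a" "a \<le> p (gamma_l p a)" "\<And>g. 0 \<le> g \<Longrightarrow> g < gamma_l p a \<Longrightarrow> p g < a"
proof -
  obtain xm where xm: "0 \<le> xm" "\<And>y. 0 \<le> y \<Longrightarrow> p y \<le> p xm" using p_max[OF I] by blast
  have "Sup (p ` {0..}) = p xm" by (rule cSup_eq_maximum) (use xm in auto)
  then have axm: "a \<le> p xm" using a by simp
  define S where "S = {g. 0 \<le> g \<and> a \<le> p g}"
  have ne: "S \<noteq> {}" using xm axm by (auto simp: S_def)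
  have bb: "bdd_below S" unfolding S_def by (rule bdd_belowI[of _ 0]) auto
  have "closed {x \<in> {0..}. a \<le> p x}"
    by (rule continuous_on_closed_Collect_le[OF continuous_on_const p_cont closed_atLeast])
  moreover have "{x \<in> {0..}. a \<le> p x} = S" by (auto simp: S_def)
  ultimately have cl: "closed S" by simp
  have inS: "Inf S \<in> S" by (rule closed_contains_Inf[OF ne bb cl])
  have gl: "gamma_l p a = Inf S" by (simp add: gamma_l_def S_def)
  show "0 \<le> gamma_l p a" "a \<le> p (gamma_l p a)" using inS gl by (auto simp: S_def)
  fix g assume g: "0 \<le> g" "g < gamma_l p a"
  show "p g < a"
  proof (rule ccontr)
    assume "\<not> p g < a"
    then have "g \<in> S" using g by (auto simp: S_def)
    then have "Inf S \<le> g" by (rule cInf_lower[OF _ bb])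
    then show False using g gl by simp
  qed
qed

end



lemma out_iff:
  fixes h g Rc Rs c E T :: real
  assumes h: "0 \<le> h" and g: "0 \<le> g" and Rc: "0 < Rc" and Rs: "0 \<le> Rs"
    and c: "c = 2 powr (2 * Rc) - 1" and E: "E = 2 powr (2 * (Rs + Rc))" and T: "T = (E - 1) / c - 1"
  shows "(h, g) \<in> outage_s Rs Rc \<longleftrightarrow> \<not> (c < h \<and> T < g)"
proof -
  have c0: "0 < c" using c Rc by simp
  have E1: "1 < E" using E Rc Rs by simp
  have i1: "Rc \<ge> 1/2 * log 2 (1 + h) \<longleftrightarrow> h \<le> c"
  proof -
    have "Rc \<ge> 1/2 * log 2 (1 + h) \<longleftrightarrow> log 2 (1 + h) \<le> 2 * Rc" by linarith
    also have "\<dots> \<longleftrightarrow> 1 + h \<le> 2 powr (2 * Rc)" by (rule log_le_iff) (use h in auto)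
    also have "\<dots> \<longleftrightarrow> h \<le> c" using c by linarith
    finally show ?thesis .
  qed
  have X0: "0 \<le> (E - 1) / (1 + g)" using E1 g by simp
  have i2: "Rc \<le> 1/2 * log 2 (1 + (2 powr (2 * (Rs + Rc)) - 1) / (1 + g)) \<longleftrightarrow> g \<le> T"
  proof -
    have "Rc \<le> 1/2 * log 2 (1 + (2 powr (2 * (Rs + Rc)) - 1) / (1 + g))
          \<longleftrightarrow> 2 * Rc \<le> log 2 (1 + (E - 1) / (1 + g))" unfolding E by linarith
    also have "\<dots> \<longleftrightarrow> 2 powr (2 * Rc) \<le> 1 + (E - 1) / (1 + g)" by (rule le_log_iff) (use X0 in auto)
    also have "\<dots> \<longleftrightarrow> c \<le> (E - 1) / (1 + g)" using c by linarith
    also have "\<dots> \<longleftrightarrow> c * (1 + g) \<le> E - 1" using g by (simp add: le_divide_eq)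
    also have "\<dots> \<longleftrightarrow> g \<le> T" unfolding T using c0 by (simp add: le_diff_eq le_divide_eq algebra_simps)
    finally show ?thesis .
  qed
  show ?thesis unfolding outage_s_def using i1 i2 by auto
qed

lemma ED_formula:
  fixes M :: "'w measure" and H G :: "'w \<Rightarrow> real" and pG :: "real \<Rightarrow> real"
  assumes M: "prob_space M"
    and H0: "\<forall>\<omega>\<in>space M. 0 \<le> H \<omega>" and G0: "\<forall>\<omega>\<in>space M. 0 \<le> G \<omega>"
    and Hm[measurable]: "H \<in> borel_measurable M" and Gm[measurable]: "G \<in> borel_measurable M"
    and ind: "prob_space.indep_var M borel H borel G"
    and dist: "distributed M lborel G (\<lambda>x. ennreal (pG x))" and pG0: "\<And>x. 0 \<le> pG x"
    and Rc: "0 < Rc" and Rs: "0 \<le> Rs" and c: "c = 2 powr (2 * Rc) - 1"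
    and T: "T = (2 powr (2 * (Rs + Rc)) - 1) / c - 1"
  shows "ED_s M H G Rs Rc = (\<integral>\<omega>. 1 / (G \<omega> + 1) \<partial>M)
      - (\<integral>\<omega>. indicator {c<..} (H \<omega>) \<partial>M)
        * (\<integral>g. pG g * (indicator {T<..} g * (1 / (g + 1) - 1 / (g + (1 + c * (1 + T))))) \<partial>lborel)"
proof -
  interpret P: prob_space M by (rule M)
  define E where "E = 2 powr (2 * (Rs + Rc))"
  have c0: "0 < c" using c Rc by simp
  have E1: "1 < E" using E_def Rc Rs by simp
  have ET: "1 + c * (1 + T) = E" unfolding T E_def[symmetric] using c0 by (simp add: field_simps)
  define \<phi> where "\<phi> = (\<lambda>\<omega>. indicator {c<..} (H \<omega>) :: real)"
  define k1 where "k1 = (\<lambda>g::real. indicator {T<..} g * (1 / (g + E)) :: real)"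
  define k2 where "k2 = (\<lambda>g::real. indicator {T<..} g * (1 / (g + 1)) :: real)"
  have k1m[measurable]: "k1 \<in> borel_measurable borel" unfolding k1_def by measurable
  have k2m[measurable]: "k2 \<in> borel_measurable borel" unfolding k2_def by measurable
  have phm[measurable]: "\<phi> \<in> borel_measurable M" unfolding \<phi>_def by measurable
  have A: "(\<integral>\<omega>. Dd (Rs + Rc) (G \<omega>) * indicator (- outage_s Rs Rc) (H \<omega>, G \<omega>) \<partial>M)
        = (\<integral>\<omega>. \<phi> \<omega> * k1 (G \<omega>) \<partial>M)"
  proof (rule Bochner_Integration.integral_cong[OF refl])
    fix \<omega> assume w: "\<omega> \<in> space M"
    have o: "(H \<omega>, G \<omega>) \<in> outage_s Rs Rc \<longleftrightarrow> \<not> (c < H \<omega> \<and> T < G \<omega>)"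
      by (rule out_iff[OF _ _ Rc Rs c refl]) (use w H0 G0 T in auto)
    show "Dd (Rs + Rc) (G \<omega>) * indicator (- outage_s Rs Rc) (H \<omega>, G \<omega>) = \<phi> \<omega> * k1 (G \<omega>)"
      unfolding \<phi>_def k1_def Dd_def E_def[symmetric] using o by (auto simp: indicator_def)
  qed
  have B: "(\<integral>\<omega>. Dd 0 (G \<omega>) * indicator (outage_s Rs Rc) (H \<omega>, G \<omega>) \<partial>M)
        = (\<integral>\<omega>. 1 / (G \<omega> + 1) - \<phi> \<omega> * k2 (G \<omega>) \<partial>M)"
  proof (rule Bochner_Integration.integral_cong[OF refl])
    fix \<omega> assume w: "\<omega> \<in> space M"
    have o: "(H \<omega>, G \<omega>) \<in> outage_s Rs Rc \<longleftrightarrow> \<not> (c < H \<omega> \<and> T < G \<omega>)"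
      by (rule out_iff[OF _ _ Rc Rs c refl]) (use w H0 G0 T in auto)
    show "Dd 0 (G \<omega>) * indicator (outage_s Rs Rc) (H \<omega>, G \<omega>) = 1 / (G \<omega> + 1) - \<phi> \<omega> * k2 (G \<omega>)"
      unfolding \<phi>_def k2_def Dd_def using o by (auto simp: indicator_def)
  qed
  have bnd: "integrable M f" if fm: "f \<in> borel_measurable M" and fb: "\<And>\<omega>. \<omega> \<in> space M \<Longrightarrow> \<bar>f \<omega>\<bar> \<le> 1"
    for f :: "'w \<Rightarrow> real"
  proof (rule P.integrable_const_bound[where B=1])
    show "AE x in M. norm (f x) \<le> 1" by (rule AE_I2) (use fb in auto)
  qed (rule fm)
  have Gb: "\<And>\<omega>. \<omega> \<in> space M \<Longrightarrow> 0 \<le> G \<omega>" using G0 by auto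
  have b1: "\<bar>k1 g\<bar> \<le> 1" if "0 \<le> g" for g
    using that E1 unfolding k1_def by (auto simp: indicator_def divide_le_eq)
  have b2: "\<bar>k2 g\<bar> \<le> 1" if "0 \<le> g" for g
    using that unfolding k2_def by (auto simp: indicator_def divide_le_eq)
  have ph1: "\<bar>\<phi> \<omega>\<bar> \<le> 1" for \<omega> unfolding \<phi>_def by (auto simp: indicator_def)
  have iph: "integrable M \<phi>" by (rule bnd[OF phm ph1])
  have ik1: "integrable M (\<lambda>\<omega>. k1 (G \<omega>))" by (rule bnd) (use Gb b1 in auto)
  have ik2: "integrable M (\<lambda>\<omega>. k2 (G \<omega>))" by (rule bnd) (use Gb b2 in auto)
  have ig: "integrable M (\<lambda>\<omega>. 1 / (G \<omega> + 1))" by (rule bnd) (use Gb in \<open>auto simp: divide_le_eq\<close>)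
  have ind1: "P.indep_var borel \<phi> borel (\<lambda>\<omega>. k1 (G \<omega>))"
    using P.indep_var_compose[OF ind, of "indicator {c<..}" borel k1 borel] unfolding \<phi>_def comp_def by simp
  have ind2: "P.indep_var borel \<phi> borel (\<lambda>\<omega>. k2 (G \<omega>))"
    using P.indep_var_compose[OF ind, of "indicator {c<..}" borel k2 borel] unfolding \<phi>_def comp_def by simp
  have e1: "(\<integral>\<omega>. \<phi> \<omega> * k1 (G \<omega>) \<partial>M) = (\<integral>\<omega>. \<phi> \<omega> \<partial>M) * (\<integral>\<omega>. k1 (G \<omega>) \<partial>M)"
    by (rule P.indep_var_lebesgue_integral[OF ind1 iph ik1])
  have e2: "(\<integral>\<omega>. \<phi> \<omega> * k2 (G \<omega>) \<partial>M) = (\<integral>\<omega>. \<phi> \<omega> \<partial>M) * (\<integral>\<omega>. k2 (G \<omega>) \<partial>M)"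
    by (rule P.indep_var_lebesgue_integral[OF ind2 iph ik2])
  have i12: "integrable M (\<lambda>\<omega>. \<phi> \<omega> * k2 (G \<omega>))" by (rule P.indep_var_integrable[OF ind2 iph ik2])
  have d1: "(\<integral>\<omega>. k1 (G \<omega>) \<partial>M) = (\<integral>g. pG g * k1 g \<partial>lborel)"
    by (rule distributed_integral[OF dist, symmetric]) (use pG0 in auto)
  have d2: "(\<integral>\<omega>. k2 (G \<omega>) \<partial>M) = (\<integral>g. pG g * k2 g \<partial>lborel)"
    by (rule distributed_integral[OF dist, symmetric]) (use pG0 in auto)
  have il1: "integrable lborel (\<lambda>g. pG g * k1 g)"
    using distributed_integrable[OF dist, of k1] ik1 pG0 by simp
  have il2: "integrable lborel (\<lambda>g. pG g * k2 g)"
    using distributed_integrable[OF dist, of k2] ik2 pG0 by simp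
  have kk: "(\<integral>g. pG g * (indicator {T<..} g * (1 / (g + 1) - 1 / (g + (1 + c * (1 + T))))) \<partial>lborel)
       = (\<integral>g. pG g * k2 g \<partial>lborel) - (\<integral>g. pG g * k1 g \<partial>lborel)"
  proof -
    have "(\<integral>g. pG g * (indicator {T<..} g * (1 / (g + 1) - 1 / (g + (1 + c * (1 + T))))) \<partial>lborel)
        = (\<integral>g. pG g * k2 g - pG g * k1 g \<partial>lborel)"
      unfolding ET k1_def k2_def by (rule Bochner_Integration.integral_cong) (auto simp: algebra_simps)
    also have "\<dots> = (\<integral>g. pG g * k2 g \<partial>lborel) - (\<integral>g. pG g * k1 g \<partial>lborel)"
      by (rule Bochner_Integration.integral_diff[OF il2 il1])
    finally show ?thesis .
  qed
  have "ED_s M H G Rs Rc = (\<integral>\<omega>. \<phi> \<omega> * k1 (G \<omega>) \<partial>M) + (\<integral>\<omega>. 1 / (G \<omega> + 1) - \<phi> \<omega> * k2 (G \<omega>) \<partial>M)"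
    unfolding ED_s_def A B ..
  also have "\<dots> = (\<integral>\<omega>. \<phi> \<omega> * k1 (G \<omega>) \<partial>M) + ((\<integral>\<omega>. 1 / (G \<omega> + 1) \<partial>M) - (\<integral>\<omega>. \<phi> \<omega> * k2 (G \<omega>) \<partial>M))"
    by (simp add: Bochner_Integration.integral_diff[OF ig i12])
  also have "\<dots> = (\<integral>\<omega>. 1 / (G \<omega> + 1) \<partial>M) - (\<integral>\<omega>. \<phi> \<omega> \<partial>M) * ((\<integral>g. pG g * k2 g \<partial>lborel) - (\<integral>g. pG g * k1 g \<partial>lborel))"
    unfolding e1 e2 d1 d2 by (simp add: algebra_simps)
  finally show ?thesis unfolding kk \<phi>_def .
qed




theorem lemma2:
  fixes M :: "'w measure" and H G :: "'w \<Rightarrow> real"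
    and pH pG :: "real \<Rightarrow> real" and Rc a :: real
  assumes "prob_space M"
    and "\<forall>\<omega>\<in>space M. 0 \<le> H \<omega>" and "\<forall>\<omega>\<in>space M. 0 \<le> G \<omega>"
    and "\<forall>x. 0 \<le> pH x" and "\<forall>x. 0 \<le> pG x"
    and "distributed M lborel H (\<lambda>x. ennreal (pH x))"
    and "distributed M lborel G (\<lambda>x. ennreal (pG x))"
    and "prob_space.indep_var M borel H borel G"
    and "continuous_on {0..} pG" and "quasiconcave_nonneg pG"
    and "Rc > 0"
    and "target_alpha pG Rc a"
  shows "let Rs = 1/2 * log 2 (1 + (1 + gamma_l pG a) * (2 powr (2 * Rc) - 1)) - Rc
         in 0 \<le> Rs \<and> (\<forall>Rs'. 0 \<le> Rs' \<longrightarrow> ED_s M H G Rs Rc \<le> ED_s M H G Rs' Rc)"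
proof -
  note M = assms(1) and H0 = assms(2) and G0 = assms(3) and pG0' = assms(5)
    and distH = assms(6) and distG = assms(7) and ind = assms(8) and Rc = assms(11)
  interpret P: prob_space M by (rule M)
  have pG0: "\<And>x. 0 \<le> pG x" using pG0' by auto
  have Hm[measurable]: "H \<in> borel_measurable M" using distributed_measurable[OF distH] by simp
  have Gm[measurable]: "G \<in> borel_measurable M" using distributed_measurable[OF distG] by simp
  have pm[measurable]: "pG \<in> borel_measurable lborel" by (rule distributed_real_measurable[OF pG0 distG])
  have ipl: "integrable lborel (\<lambda>x. pG x * 1)"
    using distributed_integrable[OF distG, of "\<lambda>_. 1"] pG0 by simp
  have pint: "set_integrable lborel {0..} pG"
    unfolding set_integrable_def using integrable_real_mult_indicator[of "{0..}" lborel pG] ipl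
    by (simp add: mult.commute)
  define c where "c = 2 powr (2 * Rc) - 1"
  have c0: "0 < c" using Rc by (simp add: c_def)
  interpret dens pG c
    by unfold_locales (use pG0 pm assms(9) assms(10) pint c0 in auto)
  have I01: "I0 = 1"
  proof -
    have "(\<integral>x. pG x * indicator {0..} x \<partial>lborel) = (\<integral>\<omega>. indicator {0..} (G \<omega>) \<partial>M)"
      by (rule distributed_integral[OF distG]) (use pG0 in auto)
    also have "\<dots> = (\<integral>\<omega>. 1 \<partial>M)"
      by (rule Bochner_Integration.integral_cong) (use G0 in \<open>auto simp: indicator_def\<close>)
    also have "\<dots> = 1" by (simp add: P.prob_space)
    finally show ?thesis unfolding I0_def set_lebesgue_integral_def by (simp add: mult.commute)
  qed
  define tt where "tt = gamma_l pG a"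
  have ta: "0 \<le> a" "a \<le> Sup (pG ` {0..})"
    and targ0: "(LINT g:{tt..}|lborel. (pG g - a) / ((1 + tt) * 2 powr (2 * Rc) + g - tt)\<^sup>2) = 0"
    using assms(12) unfolding target_alpha_def tt_def by auto
  have gp: "0 \<le> tt" "a \<le> pG tt" "\<And>g. 0 \<le> g \<Longrightarrow> g < tt \<Longrightarrow> pG g < a"
    using gamma_props[of a] ta I01 unfolding tt_def by auto
  have targ: "(LINT g:{tt<..}|lborel. (pG g - a) / (g + D tt)\<^sup>2) = 0"
  proof -
    have e: "\<And>g. (1 + tt) * 2 powr (2 * Rc) + g - tt = g + D tt"
      unfolding D_def by (simp add: c_def algebra_simps)
    have "(LINT g:{tt<..}|lborel. (pG g - a) / (g + D tt)\<^sup>2) = (LINT g:{tt..}|lborel. (pG g - a) / (g + D tt)\<^sup>2)"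
    proof (rule set_integral_cong_set)
      show "set_borel_measurable lborel {tt..} (\<lambda>g. (pG g - a) / (g + D tt)\<^sup>2)"
        unfolding set_borel_measurable_def by measurable
      show "set_borel_measurable lborel {tt<..} (\<lambda>g. (pG g - a) / (g + D tt)\<^sup>2)"
        unfolding set_borel_measurable_def by measurable
      show "AE x in lborel. (x \<in> {tt..}) = (x \<in> {tt<..})"
        using AE_lborel_singleton[of tt] by eventually_elim auto
    qed
    also have "\<dots> = 0" using targ0 unfolding e .
    finally show ?thesis .
  qed
  have Fmax: "\<And>T. 0 \<le> T \<Longrightarrow> F T \<le> F tt"
    by (rule F_le_max[OF gp(1) gp(2) gp(3) targ])
  have Fform: "F T = (\<integral>g. pG g * (indicator {T<..} g * (1 / (g + 1) - 1 / (g + (1 + c * (1 + T))))) \<partial>lborel)" for T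
    unfolding F_def set_lebesgue_integral_def kf_def D_def
    by (rule Bochner_Integration.integral_cong) (auto simp: indicator_def)
  define E0 where "E0 = (\<integral>\<omega>. 1 / (G \<omega> + 1) \<partial>M)"
  define Ph where "Ph = (\<integral>\<omega>. (indicator {c<..} (H \<omega>) :: real) \<partial>M)"
  have Ph0: "0 \<le> Ph" unfolding Ph_def by (rule Bochner_Integration.integral_nonneg) auto
  have EDf: "ED_s M H G Rs Rc = E0 - Ph * F ((2 powr (2 * (Rs + Rc)) - 1) / c - 1)" if "0 \<le> Rs" for Rs
    unfolding E0_def Ph_def Fform
    by (rule ED_formula[OF M H0 G0 Hm Gm ind distG pG0 Rc that c_def refl])
  define Rs0 where "Rs0 = 1/2 * log 2 (1 + (1 + tt) * c) - Rc"
  have X0: "1 + c \<le> 1 + (1 + tt) * c" using gp(1) c0 by (simp add: algebra_simps)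
  have Xpos: "0 < 1 + (1 + tt) * c" using gp(1) c0 by (simp add: add_pos_nonneg)
  have Rs00: "0 \<le> Rs0"
  proof -
    have "2 powr (2 * Rc) \<le> 1 + (1 + tt) * c" using X0 by (simp add: c_def)
    then have "2 * Rc \<le> log 2 (1 + (1 + tt) * c)" using le_log_iff[OF _ Xpos, of 2 "2 * Rc"] by simp
    then show ?thesis unfolding Rs0_def by simp
  qed
  have T0: "(2 powr (2 * (Rs0 + Rc)) - 1) / c - 1 = tt"
  proof -
    have "2 * (Rs0 + Rc) = log 2 (1 + (1 + tt) * c)" unfolding Rs0_def by simp
    then have "2 powr (2 * (Rs0 + Rc)) = 1 + (1 + tt) * c" using Xpos by simp
    then show ?thesis using c0 by simp
  qed
  have main: "ED_s M H G Rs0 Rc \<le> ED_s M H G Rs' Rc" if Rs': "0 \<le> Rs'" for Rs'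
  proof -
    have "2 powr (2 * Rc) \<le> 2 powr (2 * (Rs' + Rc))" by (rule powr_mono) (use Rs' in auto)
    then have "c \<le> 2 powr (2 * (Rs' + Rc)) - 1" by (simp add: c_def)
    then have "0 \<le> (2 powr (2 * (Rs' + Rc)) - 1) / c - 1" using c0 by (simp add: le_divide_eq)
    then have "F ((2 powr (2 * (Rs' + Rc)) - 1) / c - 1) \<le> F tt" by (rule Fmax)
    then have "Ph * F ((2 powr (2 * (Rs' + Rc)) - 1) / c - 1) \<le> Ph * F tt" using Ph0 by (rule mult_left_mono)
    then show ?thesis unfolding EDf[OF Rs00] EDf[OF Rs'] T0 by simp
  qed
  show ?thesis unfolding Let_def using Rs00 main unfolding Rs0_def tt_def c_def by auto
qed



end
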